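(* Let $n\ge2$, $\sigma\ge2$, and let $s$ be a random string of length $n$ with characters i.i.d. uniform over an alphabet of size $\sigma$; let $k$ be the number of tokens of $\mathcal{F}(s)$. Put $p=(\sigma-1)/\sigma$, $m=n-1$, $q=(2-\sigma)/\sigma$. Then \[\mathrm{Var}[k]=\frac{mp(1-p)}{4}-\frac{mp(1-p)\,q^{m-1}}{2}+\frac{1-q^{2m}}{16}.\] In particular $\mathrm{Var}[k]=0$ when $n=2$, and $\mathrm{Var}[k]-(n-1)(\sigma-1)/(4\sigma^2)$ is bounded independently of $n$.
   Context: Let $\texttt{@},\texttt{\$}$ be two distinct symbols not in the alphabet. For a string $s$ of length $n$ let $\hat s=\texttt{@}\,s\,\texttt{\$}$ (positions $1,\dots,n+2$); $\hat s[i..j)$ is the substring at positions $i,\dots,j-1$. The leading (trailing) run of a non-empty string is its longest prefix (suffix) consisting of one repeated symbol. The Flashback decomposition $\mathcal{F}(s)$ is the sequence of tokens (pairs $(\sigma,p)$) produced as follows, starting from active span $[lo,hi)=[1,n+3)$: if $lo\ge hi$, stop. Let $\ell$ be the leading-run length of $\hat s[lo..hi)$. If $\ell=hi-lo$, append $(\hat s[lo..hi),0)$ and stop. Otherwise let $\hat s[r..hi)$ be the trailing run of $\hat s[lo..hi)$ and $\sigma=\hat s[lo..lo+\ell)\cdot\hat s[r..hi)$; if $lo+\ell\ge r$, append $(\sigma,0)$ and stop; otherwise append $(\sigma,\ell)$ and repeat with $[lo+\ell,r)$. *)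

theory Defs
  imports "HOL-Probability.Probability"
begin

text \<open>Extended alphabet: the two sentinel symbols @ and $ together with the
  ordinary characters (natural numbers; a string over an alphabet of size
  sz is a list with entries in {..<sz}).\<close>
datatype sym = At | Dollar | Ch nat

definition hat :: "nat list \<Rightarrow> sym list" where
  "hat s = At # map Ch s @ [Dollar]"

definition lead_run :: "'a list \<Rightarrow> nat" where
  "lead_run w = length (takeWhile (\<lambda>c. c = hd w) w)"

definition trail_run :: "'a list \<Rightarrow> nat" where
  "trail_run w = lead_run (rev w)"

lemma lead_run_pos: "w \<noteq> [] \<Longrightarrow> lead_run w \<ge> 1"
  by (cases w) (auto simp: lead_run_def)

function flash :: "'a list \<Rightarrow> ('a list \<times> nat) list" where
  "flash w =
    (if w = [] then []
     else let l = lead_run w in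
       if l = length w then [(w, 0)]
       else let t = trail_run w;
                sg = take l w @ drop (length w - t) w in
         if l \<ge> length w - t then [(sg, 0)]
         else (sg, l) # flash (drop l (take (length w - t) w)))"
  by pat_completeness auto
termination
  apply (relation "Wellfounded.measure length")
   apply simp
  apply (simp add: Let_def)
  apply (drule lead_run_pos)
  apply simp
  done

definition flashback :: "nat list \<Rightarrow> (sym list \<times> nat) list" where
  "flashback s = flash (hat s)"

definition ntok :: "nat list \<Rightarrow> nat" where
  "ntok s = length (flashback s)"

definition strings :: "nat \<Rightarrow> nat \<Rightarrow> nat list set" where
  "strings sz n = {s. length s = n \<and> set s \<subseteq> {..<sz}}"

definition var_k :: "nat \<Rightarrow> nat \<Rightarrow> real" where
  "var_k sz n =
     measure_pmf.variance (pmf_of_set (strings sz n)) (\<lambda>s. real (ntok s))"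

end

theory Submission imports Defs begin

declare flash.simps[simp del]

fun nb :: "'a list \<Rightarrow> nat" where
  "nb (x # y # zs) = (if x = y then 0 else 1) + nb (y # zs)"
| "nb _ = 0"

lemma nb_Cons: "nb (x # ys) = nb ys + (if ys \<noteq> [] \<and> x \<noteq> hd ys then 1 else 0)"
  by (cases ys) auto

lemma nb_append: "nb (xs @ ys) = nb xs + nb ys + (if xs \<noteq> [] \<and> ys \<noteq> [] \<and> last xs \<noteq> hd ys then 1 else 0)"
  by (induction xs rule: nb.induct) (auto simp: nb_Cons)

lemma nb_replicate: "nb (replicate k a) = 0"
proof (induction k)
  case (Suc k) then show ?case by (cases k) (auto simp: nb_Cons)
qed simp

lemma nb_map_Ch: "nb (map Ch xs) = nb xs"
  by (induction xs rule: nb.induct) simp_all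

lemma lead_facts:
  assumes "w \<noteq> []"
  shows "take (lead_run w) w = replicate (lead_run w) (hd w)"
    and "lead_run w \<le> length w"
    and "lead_run w < length w \<Longrightarrow> w ! lead_run w \<noteq> hd w"
proof -
  have e: "takeWhile (\<lambda>c. c = hd w) w = take (lead_run w) w"
    unfolding lead_run_def by (rule takeWhile_eq_take)
  have "replicate (lead_run w) (hd w) = takeWhile (\<lambda>c. c = hd w) w"
    unfolding lead_run_def by (rule replicate_length_same) (auto dest: set_takeWhileD)
  then show "take (lead_run w) w = replicate (lead_run w) (hd w)" using e by simp
  show "lead_run w \<le> length w" unfolding lead_run_def by (rule length_takeWhile_le)
  show "lead_run w < length w \<Longrightarrow> w ! lead_run w \<noteq> hd w"
    unfolding lead_run_def using nth_length_takeWhile by fastforce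
qed

lemma trail_facts:
  assumes "w \<noteq> []"
  shows "drop (length w - trail_run w) w = replicate (trail_run w) (last w)"
    and "trail_run w \<le> length w" and "trail_run w \<ge> 1"
    and "trail_run w < length w \<Longrightarrow> w ! (length w - Suc (trail_run w)) \<noteq> last w"
proof -
  have r: "rev w \<noteq> []" using assms by simp
  note L = lead_facts[OF r]
  have hr: "hd (rev w) = last w" using assms by (simp add: hd_rev)
  have "rev (drop (length w - trail_run w) w) = take (trail_run w) (rev w)"
    by (simp add: take_rev)
  also have "\<dots> = replicate (trail_run w) (last w)" using L(1) hr by (simp add: trail_run_def)
  finally show "drop (length w - trail_run w) w = replicate (trail_run w) (last w)"
    by (metis rev_replicate rev_rev_ident)
  show "trail_run w \<le> length w" using L(2) by (simp add: trail_run_def)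
  show "trail_run w \<ge> 1" using lead_run_pos[OF r] by (simp add: trail_run_def)
  assume "trail_run w < length w"
  then have "rev w ! trail_run w \<noteq> last w" using L(3) hr by (simp add: trail_run_def)
  then show "w ! (length w - Suc (trail_run w)) \<noteq> last w"
    using \<open>trail_run w < length w\<close> by (simp add: rev_nth)
qed

lemma flash_len: "w \<noteq> [] \<Longrightarrow> length (flash w) = (nb w + 2) div 2"
proof (induction w rule: flash.induct)
  case (1 w)
  define l where "l = lead_run w"
  define t where "t = trail_run w"
  define a where "a = hd w"
  define b where "b = last w"
  note L = lead_facts[OF "1.prems", folded l_def a_def]
  note T = trail_facts[OF "1.prems", folded t_def b_def]
  show ?case
  proof (cases "l = length w")
    case True
    then have "w = replicate l a" using L(1) by simp
    then have "nb w = 0" using nb_replicate by metis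
    then show ?thesis using True "1.prems" by (subst flash.simps) (simp add: l_def)
  next
    case False
    then have ll: "l < length w" using L(2) by simp
    show ?thesis
    proof (cases "l \<ge> length w - t")
      case True
      have d: "drop l w = drop (l - (length w - t)) (drop (length w - t) w)"
        using True by simp
      then have "drop l w = replicate (t - (l - (length w - t))) b" using T(1) by simp
      then have "nb (drop l w) = 0" by (simp add: nb_replicate)
      moreover have "nb (take l w) = 0" using L(1) by (simp add: nb_replicate)
      moreover have "w = take l w @ drop l w" by simp
      ultimately have "nb w \<le> 1" using nb_append[of "take l w" "drop l w"]
        by (auto split: if_splits)
      then show ?thesis using True False "1.prems"
        by (subst flash.simps) (simp add: l_def[symmetric] t_def[symmetric] Let_def)
    next
      case False2: False
      define mid where "mid = drop l (take (length w - t) w)"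
      have IH: "length (flash mid) = (nb mid + 2) div 2"
        using "1.IH"[OF "1.prems" l_def False t_def refl False2] mid_def False2 by auto
      have k: "take l (take (length w - t) w) = take l w" using False2 by (simp add: min_def)
      then have k2: "take (length w - t) w = take l w @ mid" unfolding mid_def
        by (metis append_take_drop_id)
      have w: "w = take l w @ mid @ drop (length w - t) w"
        by (metis k2 append_take_drop_id append.assoc)
      have mne: "mid \<noteq> []" using False2 ll unfolding mid_def by simp
      have hm: "hd mid = w ! l" using False2 ll unfolding mid_def by (simp add: hd_drop_conv_nth)
      have lm: "last mid = w ! (length w - Suc t)" using False2 ll T unfolding mid_def
        by (simp add: last_conv_nth)
      have lt: "t < length w" using False2 by simp
      have l1: "l \<ge> 1" using lead_run_pos[OF "1.prems"] l_def by simp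
      have A1: "take l w = replicate l a" by (rule L(1))
      have A2: "drop (length w - t) w = replicate t b" by (rule T(1))
      have n1: "a \<noteq> hd mid" using hm L(3)[OF ll] by simp
      have n2: "last mid \<noteq> b" using lm T(4)[OF lt] by (simp add: b_def)
      have e2: "nb (mid @ replicate t b) = nb mid + 1"
        using nb_append[of mid "replicate t b"] mne n2 T(3) by (simp add: nb_replicate)
      have e1: "nb (replicate l a @ (mid @ replicate t b)) = nb (mid @ replicate t b) + 1"
        using nb_append[of "replicate l a" "mid @ replicate t b"] mne n1 l1 by (simp add: nb_replicate)
      have "nb w = nb mid + 2"
        using w A1 A2 e1 e2 by simp
      then show ?thesis using False False2 "1.prems" IH
        by (subst flash.simps) (simp add: l_def[symmetric] t_def[symmetric] Let_def mid_def)
    qed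
  qed
qed


lemma ntok_nb: "s \<noteq> [] \<Longrightarrow> ntok s = 2 + nb s div 2"
proof -
  assume "s \<noteq> []"
  have "nb (map Ch s @ [Dollar]) = nb s + 1"
    using nb_append[of "map Ch s" "[Dollar]"] \<open>s \<noteq> []\<close> by (simp add: nb_map_Ch last_map)
  then have "nb (hat s) = nb s + 2"
    using \<open>s \<noteq> []\<close> by (simp add: hat_def nb_Cons hd_map)
  then show ?thesis unfolding ntok_def flashback_def
    by (subst flash_len) (auto simp: hat_def)
qed

lemma strings_Suc: "strings sz (Suc n) = (\<lambda>(c,s). c#s) ` ({..<sz} \<times> strings sz n)"
  by (auto simp: strings_def length_Suc_conv image_iff)

lemma strings_0: "strings sz 0 = {[]}"
  by (auto simp: strings_def)

lemma finite_strings: "finite (strings sz n)"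
  unfolding strings_def using finite_lists_length_eq[of "{..<sz}" n] by (simp add: conj_commute)

lemma card_strings: "card (strings sz n) = sz ^ n"
  unfolding strings_def using card_lists_length_eq[of "{..<sz}" n] by (simp add: conj_commute)

lemma sum_strings_Suc:
  "(\<Sum>s\<in>strings sz (Suc n). F s) = (\<Sum>c<sz. \<Sum>s\<in>strings sz n. F (c#s))"
proof -
  have "(\<Sum>c<sz. \<Sum>s\<in>strings sz n. F (c#s)) = (\<Sum>(c,s)\<in>{..<sz} \<times> strings sz n. F (c#s))"
    by (rule sum.cartesian_product)
  also have "\<dots> = sum F ((\<lambda>(c,s). c#s) ` ({..<sz} \<times> strings sz n))"
    by (subst sum.reindex) (auto simp: inj_on_def split_def comp_def)
  finally show ?thesis unfolding strings_Suc by simp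
qed

definition S :: "nat \<Rightarrow> nat \<Rightarrow> (nat \<Rightarrow> real) \<Rightarrow> real" where
  "S sz n g = (\<Sum>s\<in>strings sz (Suc n). g (nb s))"

lemma S_lin:
  "S sz n (\<lambda>d. c0 + c1 * real d + c2 * real d ^ 2 + c3 * (-1) ^ d + c4 * (real d * (-1) ^ d))
   = c0 * S sz n (\<lambda>_. 1) + c1 * S sz n real + c2 * S sz n (\<lambda>d. real d ^ 2)
     + c3 * S sz n (\<lambda>d. (-1) ^ d) + c4 * S sz n (\<lambda>d. real d * (-1) ^ d)"
  by (simp add: S_def sum.distrib sum_distrib_left)

lemma sum_if_one:
  assumes "h < sz"
  shows "(\<Sum>c<sz. (if c = h then X else Y)) = X + (real sz - 1) * (Y::real)"
proof -
  have "(\<Sum>c<sz. (if c = h then X else Y)) = (if h = h then X else Y) + (\<Sum>c\<in>{..<sz}-{h}. (if c = h then X else Y))"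
    by (rule sum.remove) (use assms in auto)
  also have "(\<Sum>c\<in>{..<sz}-{h}. (if c = h then X else Y)) = (\<Sum>c\<in>{..<sz}-{h}. Y)"
    by (rule sum.cong) auto
  also have "\<dots> = real (sz - 1) * Y" using assms by simp
  also have "real (sz - 1) = real sz - 1" using assms by simp
  finally show ?thesis by simp
qed

lemma S_0: "S sz 0 g = real sz * g 0"
  by (simp add: S_def sum_strings_Suc strings_0)

lemma S_Suc: "S sz (Suc n) g = S sz n g + (real sz - 1) * S sz n (\<lambda>d. g (Suc d))"
proof -
  have "S sz (Suc n) g = (\<Sum>c<sz. \<Sum>s\<in>strings sz (Suc n). g (nb (c#s)))"
    by (simp add: S_def sum_strings_Suc[of _ sz "Suc n"])
  also have "\<dots> = (\<Sum>s\<in>strings sz (Suc n). \<Sum>c<sz. g (nb (c#s)))"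
    by (rule sum.swap)
  also have "\<dots> = (\<Sum>s\<in>strings sz (Suc n). g (nb s) + (real sz - 1) * g (Suc (nb s)))"
  proof (rule sum.cong)
    fix s assume s: "s \<in> strings sz (Suc n)"
    then have ne: "s \<noteq> []" and h: "hd s < sz"
      by (auto simp: strings_def) (metis hd_in_set length_0_conv lessThan_iff nat.distinct(1) subsetD)
    have "(\<Sum>c<sz. g (nb (c#s))) = (\<Sum>c<sz. if c = hd s then g (nb s) else g (Suc (nb s)))"
      by (rule sum.cong) (auto simp: nb_Cons ne)
    then show "(\<Sum>c<sz. g (nb (c#s))) = g (nb s) + (real sz - 1) * g (Suc (nb s))"
      using sum_if_one[OF h] by simp
  qed simp
  also have "\<dots> = S sz n g + (real sz - 1) * S sz n (\<lambda>d. g (Suc d))"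
    by (simp add: S_def sum.distrib sum_distrib_left)
  finally show ?thesis .
qed

lemma S_cong: "(\<And>d. f d = g d) \<Longrightarrow> S sz n f = S sz n g"
  by (simp add: S_def)

lemma S_P0: "S sz n (\<lambda>_. 1) = real sz ^ Suc n"
  by (induction n) (simp_all add: S_0 S_Suc algebra_simps)

lemma S_P1: "S sz n real = real n * (real sz - 1) * real sz ^ n"
proof (induction n)
  case 0 then show ?case by (simp add: S_0)
next
  case (Suc n)
  have "S sz n (\<lambda>d. real (Suc d)) = S sz n (\<lambda>d. 1 + 1 * real d + 0 * real d ^ 2 + 0 * (-1) ^ d + 0 * (real d * (-1) ^ d))"
    by (rule S_cong) simp
  also have "\<dots> = S sz n (\<lambda>_. 1) + S sz n real" by (subst S_lin) simp
  finally have e: "S sz n (\<lambda>d. real (Suc d)) = S sz n (\<lambda>_. 1) + S sz n real" .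
  show ?case by (subst S_Suc, simp only: e Suc S_P0) (simp add: algebra_simps)
qed

lemma S_P3: "S sz n (\<lambda>d. (-1) ^ d) = real sz * (2 - real sz) ^ n"
proof (induction n)
  case 0 then show ?case by (simp add: S_0)
next
  case (Suc n)
  have "S sz n (\<lambda>d. (-1) ^ Suc d) = S sz n (\<lambda>d. 0 + 0 * real d + 0 * real d ^ 2 + (-1) * (-1) ^ d + 0 * (real d * (-1) ^ d))"
    by (rule S_cong) simp
  also have "\<dots> = - S sz n (\<lambda>d. (-1) ^ d)" by (subst S_lin) simp
  finally have e: "S sz n (\<lambda>d. (-1) ^ Suc d) = - S sz n (\<lambda>d. (-1) ^ d)" .
  show ?case by (subst S_Suc, simp only: e Suc) (simp add: algebra_simps)
qed

lemma S_P2: "real sz * S sz n (\<lambda>d. real d ^ 2) = real sz ^ n * (real n * (real sz - 1) + real n ^ 2 * (real sz - 1) ^ 2)"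
proof (induction n)
  case 0 then show ?case by (simp add: S_0)
next
  case (Suc n)
  have "S sz n (\<lambda>d. real (Suc d) ^ 2) = S sz n (\<lambda>d. 1 + 2 * real d + 1 * real d ^ 2 + 0 * (-1) ^ d + 0 * (real d * (-1) ^ d))"
    by (rule S_cong) (simp add: power2_eq_square algebra_simps)
  also have "\<dots> = S sz n (\<lambda>_. 1) + 2 * S sz n real + S sz n (\<lambda>d. real d ^ 2)" by (subst S_lin) simp
  finally have e: "S sz n (\<lambda>d. real (Suc d) ^ 2) = S sz n (\<lambda>_. 1) + 2 * S sz n real + S sz n (\<lambda>d. real d ^ 2)" .
  have "real sz * S sz (Suc n) (\<lambda>d. real d ^ 2) = real sz * (real sz * S sz n (\<lambda>d. real d ^ 2))
     + (real sz - 1) * real sz * (real sz ^ Suc n + 2 * (real n * (real sz - 1) * real sz ^ n))"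
    by (subst S_Suc, simp only: e S_P0 S_P1) (simp add: algebra_simps)
  also have "\<dots> = real sz ^ Suc n * (real (Suc n) * (real sz - 1) + real (Suc n) ^ 2 * (real sz - 1) ^ 2)"
    unfolding Suc by (simp add: algebra_simps power2_eq_square)
  finally show ?case .
qed

lemma S_P4: "S sz (Suc n) (\<lambda>d. real d * (-1) ^ d) = - real (Suc n) * (real sz - 1) * real sz * (2 - real sz) ^ n"
proof (induction n)
  case 0
  have "S sz 0 (\<lambda>d. real (Suc d) * (-1) ^ Suc d) = - real sz" by (simp add: S_0)
  then show ?case by (subst S_Suc) (simp add: S_0 algebra_simps)
next
  case (Suc n)
  have "S sz (Suc n) (\<lambda>d. real (Suc d) * (-1) ^ Suc d) = S sz (Suc n) (\<lambda>d. 0 + 0 * real d + 0 * real d ^ 2 + (-1) * (-1) ^ d + (-1) * (real d * (-1) ^ d))"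
    by (rule S_cong) (simp add: algebra_simps)
  also have "\<dots> = - S sz (Suc n) (\<lambda>d. (-1) ^ d) - S sz (Suc n) (\<lambda>d. real d * (-1) ^ d)" by (subst S_lin) simp
  finally have e: "S sz (Suc n) (\<lambda>d. real (Suc d) * (-1) ^ Suc d) = - S sz (Suc n) (\<lambda>d. (-1) ^ d) - S sz (Suc n) (\<lambda>d. real d * (-1) ^ d)" .
  show ?case
    by (subst S_Suc, simp only: e Suc S_P3) (simp add: algebra_simps)
qed


lemma div2_real: "real (d div 2) = real d / 2 - 1/4 + (-1) ^ d / 4"
proof (cases "even d")
  case True then obtain k where "d = 2 * k" by blast
  then show ?thesis by simp
next
  case False then obtain k where "d = 2 * k + 1" using oddE by blast
  then show ?thesis by (simp add: field_simps)
qed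

lemma sq_aux:
  fixes a d e :: real
  assumes "e * e = 1"
  shows "(7/4 + 1/2 * d + 0 * d^2 + 1/4 * e + 0 * (d * e) - E)^2
     = ((7/4 - E)^2 + 1/16) + (7/4 - E) * d + 1/4 * d^2 + (7/4 - E)/2 * e + 1/4 * (d * e)"
proof -
  have "(7/4 + 1/2 * d + 0 * d^2 + 1/4 * e + 0 * (d * e) - E)^2
     = ((7/4 - E)^2 + (e * e)/16) + (7/4 - E) * d + 1/4 * d^2 + (7/4 - E)/2 * e + 1/4 * (d * e)"
    by (simp add: power2_eq_square field_simps)
  then show ?thesis using assms by simp
qed

lemma final_alg:
  fixes m p q Q :: real
  assumes "q = 1 - 2 * p"
  shows "((7/4 - (7/4 + 1/2 * (m * p) + 1/4 * (q * Q)))^2 + 1/16)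
    + (7/4 - (7/4 + 1/2 * (m * p) + 1/4 * (q * Q))) * (m * p)
    + 1/4 * (m * p * (1 - p) + m^2 * p^2)
    + (7/4 - (7/4 + 1/2 * (m * p) + 1/4 * (q * Q)))/2 * (q * Q)
    + 1/4 * (- m * p * Q)
    = m * p * (1 - p) / 4 - m * p * (1 - p) * Q / 2 + (1 - (q * Q)^2) / 16"
  unfolding assms by (simp add: power2_eq_square field_simps)

lemma var_formula:
  fixes sz j :: nat
  assumes sz: "sz \<ge> 2"
  defines "x \<equiv> real sz"
  defines "p \<equiv> (x - 1) / x" and "q \<equiv> (2 - x) / x" and "m \<equiv> real j + 1"
  shows "var_k sz (Suc (Suc j)) = m * p * (1 - p) / 4 - m * p * (1 - p) * q ^ j / 2 + (1 - q ^ (2 * Suc j)) / 16"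
proof -
  define A where "A = strings sz (Suc (Suc j))"
  define N where "N = x ^ Suc (Suc j)"
  have x2: "x \<ge> 2" using sz unfolding x_def by simp
  have fin: "finite A" unfolding A_def by (rule finite_strings)
  have cardA: "real (card A) = N" unfolding A_def N_def x_def by (simp add: card_strings)
  have Npos: "N > 0" unfolding N_def using x2 by simp
  then have ne: "A \<noteq> {}" using cardA by auto
  define h where "h = (\<lambda>d::nat. 7/4 + 1/2 * real d + 0 * real d ^ 2 + 1/4 * (-1::real) ^ d + 0 * (real d * (-1) ^ d))"
  have F: "real (ntok s) = h (nb s)" if "s \<in> A" for s
  proof -
    have "s \<noteq> []" using that unfolding A_def strings_def by auto
    then show ?thesis unfolding h_def by (simp add: ntok_nb div2_real)
  qed
  define E where "E = measure_pmf.expectation (pmf_of_set A) (\<lambda>s. real (ntok s))"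
  have E1: "E = S sz (Suc j) h / N"
    unfolding E_def using fin ne cardA
    by (simp add: integral_pmf_of_set S_def A_def[symmetric] F cong: sum.cong)
  have V1: "var_k sz (Suc (Suc j)) = S sz (Suc j) (\<lambda>d. (h d - E)^2) / N"
    unfolding var_k_def E_def[symmetric] A_def[symmetric] using fin ne cardA
    by (simp add: integral_pmf_of_set S_def A_def[symmetric] F cong: sum.cong)
  define ED where "ED = S sz (Suc j) real / N"
  define ED2 where "ED2 = S sz (Suc j) (\<lambda>d. real d ^ 2) / N"
  define E3 where "E3 = S sz (Suc j) (\<lambda>d. (-1) ^ d) / N"
  define E4 where "E4 = S sz (Suc j) (\<lambda>d. real d * (-1) ^ d) / N"
  have S1: "S sz (Suc j) (\<lambda>_. 1) / N = 1" using sz by (simp add: S_P0 N_def x_def)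
  have hE: "S sz (Suc j) h = 7/4 * S sz (Suc j) (\<lambda>_. 1) + 1/2 * S sz (Suc j) real + 0 * S sz (Suc j) (\<lambda>d. real d ^ 2)
     + 1/4 * S sz (Suc j) (\<lambda>d. (-1) ^ d) + 0 * S sz (Suc j) (\<lambda>d. real d * (-1) ^ d)"
    unfolding h_def by (rule S_lin)
  have Eeq: "E = 7/4 + 1/2 * ED + 1/4 * E3"
    unfolding E1 hE ED_def E3_def using S1 Npos by (simp add: field_simps)
  have sq: "(h d - E)^2 = ((7/4 - E)^2 + 1/16) + (7/4 - E) * real d + 1/4 * real d^2 + (7/4 - E)/2 * (-1) ^ d + 1/4 * (real d * (-1) ^ d)" for d
    unfolding h_def by (rule sq_aux) (simp flip: power_add)
  have V2: "var_k sz (Suc (Suc j)) = ((7/4 - E)^2 + 1/16) + (7/4 - E) * ED + 1/4 * ED2 + (7/4 - E)/2 * E3 + 1/4 * E4"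
    unfolding V1 sq S_lin ED_def ED2_def E3_def E4_def using S1 Npos by (simp add: field_simps)
  have xpos: "x > 0" using x2 by simp
  have eD: "ED = m * p"
    unfolding ED_def S_P1 N_def m_def p_def x_def[symmetric] using xpos by (simp add: field_simps)
  have eD2: "ED2 = m * p * (1 - p) + m^2 * p^2"
  proof -
    have "x * S sz (Suc j) (\<lambda>d. real d ^ 2) = x ^ Suc j * (m * (x - 1) + m ^ 2 * (x - 1) ^ 2)"
      using S_P2[of sz "Suc j"] unfolding m_def x_def by (simp add: add.commute)
    then have "S sz (Suc j) (\<lambda>d. real d ^ 2) = x ^ Suc j * (m * (x - 1) + m ^ 2 * (x - 1) ^ 2) / x"
      using xpos by (subst eq_divide_eq) (simp add: mult.commute)
    then show ?thesis unfolding ED2_def N_def p_def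
      using xpos by (simp only:) (simp add: field_simps power2_eq_square)
  qed
  have Q: "q ^ j = (2 - x) ^ j / x ^ j" unfolding q_def by (simp add: power_divide)
  have e3: "E3 = q * q ^ j"
    unfolding E3_def S_P3 N_def Q x_def[symmetric] q_def using xpos by (simp add: field_simps)
  have e4: "E4 = - m * p * q ^ j"
    unfolding E4_def S_P4 N_def Q x_def[symmetric] m_def p_def using xpos by (simp add: field_simps)
  have qp: "q = 1 - 2 * p" unfolding q_def p_def using xpos by (simp add: field_simps)
  have qq: "q ^ (2 * Suc j) = (q * q ^ j)^2" by (simp only: mult_2 power_add power_Suc power2_eq_square)
  show ?thesis
    unfolding V2 Eeq eD eD2 e3 e4 qq by (rule final_alg[OF qp])
qed


lemma geo_aux:
  fixes r :: real
  assumes "0 \<le> r" "r \<le> 1"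
  shows "(real j + 1) * r ^ j * (1 - r) \<le> 1"
proof -
  have "(real j + 1) * r ^ j = (\<Sum>i<Suc j. r ^ j)" by simp
  also have "\<dots> \<le> (\<Sum>i<Suc j. r ^ i)"
    by (rule sum_mono) (use assms in \<open>auto intro: power_decreasing\<close>)
  finally have "(real j + 1) * r ^ j * (1 - r) \<le> (\<Sum>i<Suc j. r ^ i) * (1 - r)"
    using assms by (simp add: mult_right_mono)
  also have "\<dots> = 1 - r ^ Suc j" using one_diff_power_eq[of r "Suc j"] by (simp add: mult.commute)
  also have "\<dots> \<le> 1" using assms by simp
  finally show ?thesis .
qed

lemma abs_help:
  fixes A B x :: real
  assumes "\<bar>A\<bar> \<le> x / 2" "\<bar>B\<bar> \<le> 1"
  shows "\<bar>- A / 2 + B / 16\<bar> \<le> x + 1"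
  using assms by (simp add: abs_le_iff) linarith

theorem corollaryA1:
  fixes sz :: nat
  assumes "sz \<ge> 2"
  shows "(\<forall>n \<ge> 2.
            (let p = (real sz - 1) / real sz;
                 m = real n - 1;
                 q = (2 - real sz) / real sz
             in var_k sz n =
                  m * p * (1 - p) / 4 - m * p * (1 - p) * q ^ (n - 2) / 2
                  + (1 - q ^ (2 * (n - 1))) / 16))
         \<and> var_k sz 2 = 0
         \<and> (\<exists>C. \<forall>n \<ge> 2.
               \<bar>var_k sz n - real (n - 1) * (real sz - 1) / (4 * real sz ^ 2)\<bar> \<le> C)"
proof -
  define x where "x = real sz"
  define p where "p = (x - 1) / x"
  define q where "q = (2 - x) / x"
  have x2: "x \<ge> 2" using assms unfolding x_def by simp
  have VF: "var_k sz (Suc (Suc j)) = (real j + 1) * p * (1 - p) / 4 - (real j + 1) * p * (1 - p) * q ^ j / 2 + (1 - q ^ (2 * Suc j)) / 16" for j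
    using var_formula[OF assms, of j] unfolding p_def q_def x_def .
  have P1: "var_k sz n = (real n - 1) * p * (1 - p) / 4 - (real n - 1) * p * (1 - p) * q ^ (n - 2) / 2
                  + (1 - q ^ (2 * (n - 1))) / 16" if "n \<ge> 2" for n
  proof -
    obtain j where n: "n = Suc (Suc j)" using \<open>n \<ge> 2\<close> by (metis add_2_eq_Suc le_Suc_ex)
    show ?thesis unfolding n using VF[of j] by (simp add: add.commute)
  qed
  have qp: "q = 1 - 2 * p" unfolding q_def p_def using x2 by (simp add: field_simps)
  have V2: "var_k sz 2 = 0"
    using P1[of 2] unfolding qp by (simp add: power2_eq_square field_simps)
  define r where "r = \<bar>q\<bar>"
  have r0: "0 \<le> r" unfolding r_def by simp
  have r_eq: "r = (x - 2) / x" unfolding r_def q_def using x2 by (simp add: abs_if field_simps)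
  have r1: "r \<le> 1" using x2 unfolding r_eq by simp
  have omr: "1 - r = 2 / x" unfolding r_eq using x2 by (simp add: field_simps)
  have p0: "0 \<le> p" "p \<le> 1" unfolding p_def using x2 by auto
  have pp: "0 \<le> p * (1 - p)" "p * (1 - p) \<le> 1" using p0 by (auto simp: mult_le_one)
  have B: "\<bar>var_k sz n - real (n - 1) * (real sz - 1) / (4 * real sz ^ 2)\<bar> \<le> x + 1" if "n \<ge> 2" for n
  proof -
    obtain j where n: "n = Suc (Suc j)" using \<open>n \<ge> 2\<close> by (metis add_2_eq_Suc le_Suc_ex)
    have e1: "real (n - 1) * (real sz - 1) / (4 * real sz ^ 2) = (real j + 1) * p * (1 - p) / 4"
      unfolding n p_def x_def[symmetric] using x2 by (simp add: field_simps power2_eq_square)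
    have D: "var_k sz n - real (n - 1) * (real sz - 1) / (4 * real sz ^ 2)
        = - ((real j + 1) * (p * (1 - p)) * q ^ j) / 2 + (1 - q ^ (2 * Suc j)) / 16"
      unfolding e1 unfolding n VF by (simp add: field_simps)
    have g: "(real j + 1) * r ^ j * (2 / x) \<le> 1" using geo_aux[OF r0 r1, of j] omr by simp
    then have g2: "(real j + 1) * r ^ j \<le> x / 2" using x2 by (simp add: field_simps)
    have t1: "\<bar>(real j + 1) * (p * (1 - p)) * q ^ j\<bar> \<le> (real j + 1) * r ^ j"
    proof -
      have "\<bar>(real j + 1) * (p * (1 - p)) * q ^ j\<bar> = (real j + 1) * (p * (1 - p)) * r ^ j"
        unfolding r_def using p0 by (simp add: abs_mult power_abs)
      also have "\<dots> \<le> (real j + 1) * 1 * r ^ j"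
        using pp r0 by (intro mult_right_mono mult_left_mono) auto
      finally show ?thesis by simp
    qed
    have t2: "\<bar>1 - q ^ (2 * Suc j)\<bar> \<le> 1"
    proof -
      have "q ^ (2 * Suc j) = r ^ (2 * Suc j)" unfolding r_def by (simp add: power_even_abs)
      moreover have "r ^ (2 * Suc j) \<le> 1" "0 \<le> r ^ (2 * Suc j)" using r0 r1 by (simp_all only: power_le_one zero_le_power)
      ultimately show ?thesis by simp
    qed
    show ?thesis unfolding D by (rule abs_help[OF order.trans[OF t1 g2] t2])
  qed
  show ?thesis
  proof (intro conjI)
    show "\<forall>n\<ge>2. let p = (real sz - 1) / real sz; m = real n - 1; q = (2 - real sz) / real sz
          in var_k sz n = m * p * (1 - p) / 4 - m * p * (1 - p) * q ^ (n - 2) / 2 + (1 - q ^ (2 * (n - 1))) / 16"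
      using P1 unfolding p_def q_def x_def Let_def by blast
    show "var_k sz 2 = 0" by (rule V2)
    show "\<exists>C. \<forall>n\<ge>2. \<bar>var_k sz n - real (n - 1) * (real sz - 1) / (4 * real sz ^ 2)\<bar> \<le> C"
      using B by blast
  qed
qed

end
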